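(* For $i=1,\dots,q$ let $\lambda_i$ be a partition of $k_i$ and let $G_i$ be a $\lambda_i$-choosable graph. Let $\lambda=\bigcup_{i=1}^q\lambda_i$ be the multiset union (a partition of $k_1+\dots+k_q$). Then the join $\vee_{i=1}^q G_i$ is $\lambda$-choosable. In particular, if each $G_i$ is $k_i$-choosable, then $\vee_{i=1}^qG_i$ is $\{k_1,\dots,k_q\}$-choosable.
   Context: A partition of a positive integer $k$ is a finite multiset of positive integers summing to $k$. For a partition $\lambda=\{k_1,\dots,k_q\}$ of $k$, a $\lambda$-assignment of a graph $G$ is an assignment $L$ of colour sets with $|L(v)|=k$ for all $v$ such that $\bigcup_{v}L(v)$ can be partitioned into sets $C_1,\dots,C_q$ with $|L(v)\cap C_i|=k_i$ for every vertex $v$ and every $i$; $G$ is $\lambda$-choosable if for every $\lambda$-assignment $L$ there is a proper colouring $f$ with $f(v)\in L(v)$ for all $v$. $\{k\}$-choosable coincides with $k$-choosable. The join $\vee_{i=1}^qG_i$ is obtained from the disjoint union of the $G_i$ by adding all edges between $V(G_i)$ and $V(G_j)$ for all $i\ne j$. *)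

theory Defs
  imports Main "HOL-Library.Multiset"
begin

definition simple_graph :: "'a set \<Rightarrow> ('a \<Rightarrow> 'a \<Rightarrow> bool) \<Rightarrow> bool" where
  "simple_graph V E \<longleftrightarrow> finite V \<and> (\<forall>u v. E u v \<longrightarrow> u \<in> V \<and> v \<in> V)
     \<and> (\<forall>u v. E u v \<longrightarrow> E v u) \<and> (\<forall>v. \<not> E v v)"

definition is_partition :: "nat multiset \<Rightarrow> nat \<Rightarrow> bool" where
  "is_partition lam k \<longleftrightarrow> (\<forall>x \<in># lam. 0 < x) \<and> sum_mset lam = k"

text \<open>A lam-assignment of a graph with vertex set V (colours are natural numbers):
 every list has size k = sum of parts, and the union of the lists can be partitioned
 into classes C_1..C_q, indexed along a list ks enumerating lam, with
 |L(v) \<inter> C_i| = k_i.\<close>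
definition lambda_assignment :: "'a set \<Rightarrow> nat multiset \<Rightarrow> ('a \<Rightarrow> nat set) \<Rightarrow> bool" where
  "lambda_assignment V lam L \<longleftrightarrow>
     (\<forall>v\<in>V. finite (L v) \<and> card (L v) = sum_mset lam) \<and>
     (\<exists>ks :: nat list. \<exists>Cs :: nat set list.
        mset ks = lam \<and> length Cs = length ks \<and>
        (\<forall>i<length Cs. \<forall>j<length Cs. i \<noteq> j \<longrightarrow> Cs ! i \<inter> Cs ! j = {}) \<and>
        \<Union> (set Cs) = (\<Union>v\<in>V. L v) \<and>
        (\<forall>v\<in>V. \<forall>i<length ks. card (L v \<inter> Cs ! i) = ks ! i))"

definition choosable :: "'a set \<Rightarrow> ('a \<Rightarrow> 'a \<Rightarrow> bool) \<Rightarrow> nat multiset \<Rightarrow> bool" where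
  "choosable V E lam \<longleftrightarrow>
     (\<forall>L. lambda_assignment V lam L \<longrightarrow>
        (\<exists>f. (\<forall>v\<in>V. f v \<in> L v) \<and> (\<forall>u\<in>V. \<forall>v\<in>V. E u v \<longrightarrow> f u \<noteq> f v)))"

definition join_V :: "nat \<Rightarrow> (nat \<Rightarrow> 'a set) \<Rightarrow> (nat \<times> 'a) set" where
  "join_V q V = {(i, v). i < q \<and> v \<in> V i}"

definition join_E :: "nat \<Rightarrow> (nat \<Rightarrow> 'a set) \<Rightarrow> (nat \<Rightarrow> 'a \<Rightarrow> 'a \<Rightarrow> bool)
    \<Rightarrow> nat \<times> 'a \<Rightarrow> nat \<times> 'a \<Rightarrow> bool" where
  "join_E q V E x y \<longleftrightarrow>
     (case (x, y) of ((i, u), (j, v)) \<Rightarrow>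
        (i = j \<and> i < q \<and> E i u v) \<or>
        (i \<noteq> j \<and> i < q \<and> j < q \<and> u \<in> V i \<and> v \<in> V j))"

end

theory Submission
  imports Defs
begin

lemma split2:
  assumes "finite S" "image_mset h (mset_set S) = A + B"
  shows "\<exists>S1 S2. S1 \<union> S2 = S \<and> S1 \<inter> S2 = {} \<and>
           image_mset h (mset_set S1) = A \<and> image_mset h (mset_set S2) = B"
  using assms
proof (induction S arbitrary: A B rule: finite_induct)
  case empty
  then show ?case by auto
next
  case (insert x S)
  have eq: "add_mset (h x) (image_mset h (mset_set S)) = A + B"
    using insert by simp
  show ?case
  proof (cases "h x \<in># A")
    case True
    then have "A + B = add_mset (h x) ((A - {#h x#}) + B)" by simp
    with eq have "add_mset (h x) (image_mset h (mset_set S)) = add_mset (h x) ((A - {#h x#}) + B)"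
      by (rule trans)
    then have "image_mset h (mset_set S) = (A - {#h x#}) + B" by simp
    from insert.IH[OF this] obtain S1 S2 where
      s: "S1 \<union> S2 = S" "S1 \<inter> S2 = {}" "image_mset h (mset_set S1) = A - {#h x#}"
         "image_mset h (mset_set S2) = B" by blast
    have f1: "finite S1" using s(1) insert(1) by auto
    have "x \<notin> S1" using s(1) insert(2) by auto
    then have "image_mset h (mset_set (insert x S1)) = A"
      using f1 s(3) True by simp
    moreover have "insert x S1 \<union> S2 = insert x S" "insert x S1 \<inter> S2 = {}"
      using s insert(2) by auto
    ultimately show ?thesis using s(4) by blast
  next
    case False
    have "h x \<in># A + B" unfolding eq[symmetric] by simp
    then have hb: "h x \<in># B" using False by simp
    then have "A + B = add_mset (h x) (A + (B - {#h x#}))" by simp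
    with eq have "add_mset (h x) (image_mset h (mset_set S)) = add_mset (h x) (A + (B - {#h x#}))"
      by (rule trans)
    then have "image_mset h (mset_set S) = A + (B - {#h x#})" by simp
    from insert.IH[OF this] obtain S1 S2 where
      s: "S1 \<union> S2 = S" "S1 \<inter> S2 = {}" "image_mset h (mset_set S1) = A"
         "image_mset h (mset_set S2) = B - {#h x#}" by blast
    have f2: "finite S2" using s(1) insert(1) by auto
    have "x \<notin> S2" using s(1) insert(2) by auto
    then have "image_mset h (mset_set (insert x S2)) = B"
      using f2 s(4) hb by simp
    moreover have "S1 \<union> insert x S2 = insert x S" "S1 \<inter> insert x S2 = {}"
      using s insert(2) by auto
    ultimately show ?thesis using s(3) by blast
  qed
qed

lemma splitq:
  fixes q :: nat
  assumes "finite S" "image_mset h (mset_set S) = (\<Sum>i<q. lam i)"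
  shows "\<exists>T. (\<forall>i<q. T i \<subseteq> S) \<and> (\<forall>i<q. \<forall>j<q. i \<noteq> j \<longrightarrow> T i \<inter> T j = {}) \<and>
             (\<forall>i<q. image_mset h (mset_set (T i)) = lam i)"
  using assms
proof (induction q arbitrary: S)
  case 0
  then show ?case by auto
next
  case (Suc q)
  have "image_mset h (mset_set S) = (\<Sum>i<q. lam i) + lam q" using Suc by simp
  from split2[OF Suc(2) this] obtain S1 S2 where
    s: "S1 \<union> S2 = S" "S1 \<inter> S2 = {}" "image_mset h (mset_set S1) = (\<Sum>i<q. lam i)"
       "image_mset h (mset_set S2) = lam q" by blast
  have "finite S1" using s(1) Suc(2) by auto
  from Suc.IH[OF this s(3)] obtain T where
    t: "\<forall>i<q. T i \<subseteq> S1" "\<forall>i<q. \<forall>j<q. i \<noteq> j \<longrightarrow> T i \<inter> T j = {}"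
       "\<forall>i<q. image_mset h (mset_set (T i)) = lam i" by blast
  show ?case
  proof (intro exI[of _ "T(q := S2)"] conjI allI impI)
    fix i assume "i < Suc q" then show "(T(q := S2)) i \<subseteq> S" using t s by (auto simp: less_Suc_eq)
  next
    fix i j assume "i < Suc q" "j < Suc q" "i \<noteq> j"
    then show "(T(q := S2)) i \<inter> (T(q := S2)) j = {}" using t s
      by (auto simp: less_Suc_eq) blast+
  next
    fix i assume "i < Suc q" then show "image_mset h (mset_set ((T(q := S2)) i)) = lam i"
      using t s by (auto simp: less_Suc_eq)
  qed
qed

lemma restrict:
  assumes fin: "\<forall>v\<in>W. finite (L v)"
    and disj: "\<forall>i<length Cs. \<forall>j<length Cs. i \<noteq> j \<longrightarrow> Cs ! i \<inter> Cs ! j = {}"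
    and S: "S \<subseteq> {..<length Cs}" and len: "length ks = length Cs"
    and crd: "\<forall>v\<in>W. \<forall>j<length ks. card (L v \<inter> Cs ! j) = ks ! j"
    and im: "image_mset (nth ks) (mset_set S) = lam"
  shows "lambda_assignment W lam (\<lambda>v. L v \<inter> (\<Union>j\<in>S. Cs ! j))"
proof -
  define D where "D = (\<Union>j\<in>S. Cs ! j)"
  define L' where "L' v = L v \<inter> D" for v
  have finS: "finite S" using S finite_subset by blast
  have card1: "finite (L' v) \<and> card (L' v) = sum_mset lam" if v: "v \<in> W" for v
  proof -
    have "L' v = (\<Union>j\<in>S. L v \<inter> Cs ! j)" unfolding L'_def D_def by auto
    moreover have "card (\<Union>j\<in>S. L v \<inter> Cs ! j) = (\<Sum>j\<in>S. card (L v \<inter> Cs ! j))"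
    proof (rule card_UN_disjoint)
      show "finite S" by (rule finS)
      show "\<forall>j\<in>S. finite (L v \<inter> Cs ! j)" using fin v by blast
      show "\<forall>a\<in>S. \<forall>b\<in>S. a \<noteq> b \<longrightarrow> (L v \<inter> Cs ! a) \<inter> (L v \<inter> Cs ! b) = {}"
      proof (intro ballI impI)
        fix a b assume ab: "a \<in> S" "b \<in> S" "a \<noteq> b"
        then have "a < length Cs" "b < length Cs" using S by auto
        then have "Cs ! a \<inter> Cs ! b = {}" using disj ab by blast
        then show "(L v \<inter> Cs ! a) \<inter> (L v \<inter> Cs ! b) = {}" by blast
      qed
    qed
    moreover have "(\<Sum>j\<in>S. card (L v \<inter> Cs ! j)) = (\<Sum>j\<in>S. ks ! j)"
      using crd v S len by (intro sum.cong) auto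
    moreover have "(\<Sum>j\<in>S. ks ! j) = sum_mset lam"
      using im by (simp add: sum_unfold_sum_mset)
    ultimately show ?thesis using fin v unfolding L'_def by auto
  qed
  define J where "J = sorted_list_of_set S"
  define U where "U = (\<Union>v\<in>W. L' v)"
  define ks' where "ks' = map (nth ks) J"
  define Cs' where "Cs' = map (\<lambda>j. Cs ! j \<inter> U) J"
  have dJ: "distinct J" and sJ: "set J = S" using finS unfolding J_def by auto
  have m1: "mset ks' = lam" unfolding ks'_def using im mset_set_set[OF dJ] sJ by simp
  have m2: "length Cs' = length ks'" unfolding Cs'_def ks'_def by simp
  have m3: "\<forall>i<length Cs'. \<forall>j<length Cs'. i \<noteq> j \<longrightarrow> Cs' ! i \<inter> Cs' ! j = {}"
  proof (intro allI impI)
    fix a b assume ab: "a < length Cs'" "b < length Cs'" "a \<noteq> b"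
    then have "J ! a \<noteq> J ! b" using dJ by (simp add: Cs'_def nth_eq_iff_index_eq)
    moreover have "J ! a < length Cs" "J ! b < length Cs" using ab sJ S nth_mem
      unfolding Cs'_def by fastforce+
    ultimately show "Cs' ! a \<inter> Cs' ! b = {}" using disj ab unfolding Cs'_def by auto
  qed
  have m4: "\<Union> (set Cs') = (\<Union>v\<in>W. L' v)"
    unfolding Cs'_def U_def L'_def D_def using sJ by auto
  have m5: "\<forall>v\<in>W. \<forall>i<length ks'. card (L' v \<inter> Cs' ! i) = ks' ! i"
  proof (intro ballI allI impI)
    fix v t assume v: "v \<in> W" and t: "t < length ks'"
    have jS: "J ! t \<in> S" using t sJ nth_mem unfolding ks'_def by fastforce
    have "L' v \<inter> Cs' ! t = L v \<inter> Cs ! (J ! t)"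
      using t v jS unfolding Cs'_def ks'_def U_def L'_def D_def by auto
    moreover have "J ! t < length ks" using jS S len by auto
    ultimately show "card (L' v \<inter> Cs' ! t) = ks' ! t"
      using crd v t unfolding ks'_def by simp
  qed
  have "lambda_assignment W lam L'"
    unfolding lambda_assignment_def
  proof (intro conjI exI[of _ ks'] exI[of _ Cs'])
    show "\<forall>v\<in>W. finite (L' v) \<and> card (L' v) = sum_mset lam" using card1 by blast
  qed (fact m1 m2 m3 m4 m5)+
  then show ?thesis unfolding L'_def D_def .
qed

lemma core:
  assumes ch: "\<forall>i<q. choosable (V i) (E i) (lam i)"
    and LA: "lambda_assignment (join_V q V) (\<Sum>i<q. lam i) L"
  shows "\<exists>f. (\<forall>x\<in>join_V q V. f x \<in> L x) \<and>
             (\<forall>x\<in>join_V q V. \<forall>y\<in>join_V q V. join_E q V E x y \<longrightarrow> f x \<noteq> f y)"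
proof -
  have fin: "\<forall>x\<in>join_V q V. finite (L x)"
    using LA unfolding lambda_assignment_def by simp
  have ex: "\<exists>ks :: nat list. \<exists>Cs :: nat set list.
        mset ks = (\<Sum>i<q. lam i) \<and> length Cs = length ks \<and>
        (\<forall>i<length Cs. \<forall>j<length Cs. i \<noteq> j \<longrightarrow> Cs ! i \<inter> Cs ! j = {}) \<and>
        \<Union> (set Cs) = (\<Union>v\<in>join_V q V. L v) \<and>
        (\<forall>v\<in>join_V q V. \<forall>i<length ks. card (L v \<inter> Cs ! i) = ks ! i)"
    using LA unfolding lambda_assignment_def by (rule conjunct2)
  then obtain ks Cs where H: "mset ks = (\<Sum>i<q. lam i) \<and> length Cs = length ks \<and>
        (\<forall>i<length Cs. \<forall>j<length Cs. i \<noteq> j \<longrightarrow> Cs ! i \<inter> Cs ! j = {}) \<and>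
        \<Union> (set Cs) = (\<Union>v\<in>join_V q V. L v) \<and>
        (\<forall>v\<in>join_V q V. \<forall>i<length ks. card (L v \<inter> Cs ! i) = ks ! i)"
    by (elim exE) (rule that)
  note ms = H[THEN conjunct1]
  note len = H[THEN conjunct2, THEN conjunct1]
  note disj = H[THEN conjunct2, THEN conjunct2, THEN conjunct1]
  note crd = H[THEN conjunct2, THEN conjunct2, THEN conjunct2, THEN conjunct2]
  have "image_mset (nth ks) (mset_set {..<length ks}) = (\<Sum>i<q. lam i)"
  proof -
    have "mset (map (nth ks) [0..<length ks]) = mset ks" by (simp add: map_nth)
    then have "image_mset (nth ks) (mset [0..<length ks]) = mset ks" by (simp only: mset_map)
    then show ?thesis using ms by (simp only: mset_set_upto_eq_mset_upto)
  qed
  from splitq[OF _ this] obtain T where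
    T: "\<forall>i<q. T i \<subseteq> {..<length ks}" "\<forall>i<q. \<forall>j<q. i \<noteq> j \<longrightarrow> T i \<inter> T j = {}"
       "\<forall>i<q. image_mset (nth ks) (mset_set (T i)) = lam i" by blast
  define Li where "Li i v = L (i, v) \<inter> (\<Union>j\<in>T i. Cs ! j)" for i v
  have LAi: "\<forall>i<q. lambda_assignment (V i) (lam i) (Li i)"
  proof (intro allI impI)
    fix i assume i: "i < q"
    have mem: "v \<in> V i \<Longrightarrow> (i, v) \<in> join_V q V" for v using i by (simp add: join_V_def)
    show "lambda_assignment (V i) (lam i) (Li i)"
      unfolding Li_def
      apply (rule restrict[where L="\<lambda>v. L (i, v)" and ks=ks])
      using fin mem apply blast
      using disj apply blast
      using T(1) i len apply simp
      using len apply simp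
      using crd mem apply blast
      using T(3) i by blast
  qed
  then have "\<forall>i<q. \<exists>f. (\<forall>v\<in>V i. f v \<in> Li i v) \<and> (\<forall>u\<in>V i. \<forall>v\<in>V i. E i u v \<longrightarrow> f u \<noteq> f v)"
  proof (intro allI impI)
    fix i assume i: "i < q"
    have c: "choosable (V i) (E i) (lam i)" using ch i by simp
    have la: "lambda_assignment (V i) (lam i) (Li i)" using LAi i by simp
    show "\<exists>f. (\<forall>v\<in>V i. f v \<in> Li i v) \<and> (\<forall>u\<in>V i. \<forall>v\<in>V i. E i u v \<longrightarrow> f u \<noteq> f v)"
      using c[unfolded choosable_def, rule_format, OF la] .
  qed
  then have "\<forall>i. \<exists>f. i < q \<longrightarrow> (\<forall>v\<in>V i. f v \<in> Li i v) \<and> (\<forall>u\<in>V i. \<forall>v\<in>V i. E i u v \<longrightarrow> f u \<noteq> f v)"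
    by blast
  then obtain F where F0: "\<forall>i. i < q \<longrightarrow> (\<forall>v\<in>V i. F i v \<in> Li i v) \<and>
      (\<forall>u\<in>V i. \<forall>v\<in>V i. E i u v \<longrightarrow> F i u \<noteq> F i v)"
    by (rule choice[THEN exE])
  then have F: "\<forall>i<q. (\<forall>v\<in>V i. F i v \<in> Li i v) \<and>
      (\<forall>u\<in>V i. \<forall>v\<in>V i. E i u v \<longrightarrow> F i u \<noteq> F i v)" by blast
  show ?thesis
  proof (intro exI[of _ "\<lambda>(i, v). F i v"] conjI ballI impI)
    fix x assume x: "x \<in> join_V q V"
    obtain i u where xi: "x = (i, u)" "i < q" "u \<in> V i" using x unfolding join_V_def by auto
    have "F i u \<in> Li i u" using F xi(2,3) by blast
    then show "(\<lambda>(i, v). F i v) x \<in> L x" using xi(1) unfolding Li_def by simp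
  next
    fix x y assume x: "x \<in> join_V q V" and y: "y \<in> join_V q V" and e: "join_E q V E x y"
    obtain i u where xi: "x = (i, u)" "i < q" "u \<in> V i" using x unfolding join_V_def by auto
    obtain j v where yj: "y = (j, v)" "j < q" "v \<in> V j" using y unfolding join_V_def by auto
    show "(\<lambda>(i, v). F i v) x \<noteq> (\<lambda>(i, v). F i v) y"
    proof (cases "i = j")
      case True
      then have "E i u v" using e xi yj unfolding join_E_def by auto
      then have "F i u \<noteq> F i v" using F xi(2,3) yj(3) True by blast
      then show ?thesis using xi(1) yj(1) True by simp
    next
      case False
      have "F i u \<in> Li i u" using F xi(2,3) by blast
      then obtain a where a: "a \<in> T i" "F i u \<in> Cs ! a" unfolding Li_def by blast
      have "F j v \<in> Li j v" using F yj(2,3) by blast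
      then obtain b where b: "b \<in> T j" "F j v \<in> Cs ! b" unfolding Li_def by blast
      have "T i \<inter> T j = {}" using T(2)[rule_format, OF xi(2) yj(2) False] .
      then have ab: "a \<noteq> b" using a(1) b(1) by auto
      have "T i \<subseteq> {..<length ks}" using T(1)[rule_format, OF xi(2)] .
      then have "a < length ks" using a(1) by auto
      then have al: "a < length Cs" using len by simp
      have "T j \<subseteq> {..<length ks}" using T(1)[rule_format, OF yj(2)] .
      then have "b < length ks" using b(1) by auto
      then have bl: "b < length Cs" using len by simp
      have "Cs ! a \<inter> Cs ! b = {}" using disj[rule_format, OF al bl ab] .
      then have "F i u \<noteq> F j v" using a(2) b(2) by auto
      then show ?thesis using xi(1) yj(1) by simp
    qed
  qed
qed

lemma part_sum: "\<forall>i<(q::nat). is_partition (lam i) (k i) \<Longrightarrow> is_partition (\<Sum>i<q. lam i) (\<Sum>i<q. k i)"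
proof (induction q)
  case 0
  then show ?case by (simp add: is_partition_def)
next
  case (Suc q)
  then have "is_partition (\<Sum>i<q. lam i) (\<Sum>i<q. k i)" "is_partition (lam q) (k q)" by auto
  then show ?case by (auto simp: is_partition_def)
qed

lemma sum_single: "(\<Sum>i<(q::nat). {#k i#}) = mset (map k [0..<q])"
  by (induction q) auto

theorem lemma3:
  fixes q :: nat and V :: "nat \<Rightarrow> 'a set" and E :: "nat \<Rightarrow> 'a \<Rightarrow> 'a \<Rightarrow> bool"
  assumes graphs: "\<forall>i<q. simple_graph (V i) (E i)"
  shows "(\<forall>(lam :: nat \<Rightarrow> nat multiset) (k :: nat \<Rightarrow> nat).
            (\<forall>i<q. is_partition (lam i) (k i) \<and> choosable (V i) (E i) (lam i)) \<longrightarrow>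
              is_partition (\<Sum>i<q. lam i) (\<Sum>i<q. k i) \<and>
              choosable (join_V q V) (join_E q V E) (\<Sum>i<q. lam i))
       \<and> (\<forall>k :: nat \<Rightarrow> nat.
            (\<forall>i<q. 0 < k i \<and> choosable (V i) (E i) {#k i#}) \<longrightarrow>
              choosable (join_V q V) (join_E q V E) (mset (map k [0..<q])))"
proof -
  have P1: "is_partition (\<Sum>i<q. lam i) (\<Sum>i<q. k i) \<and>
              choosable (join_V q V) (join_E q V E) (\<Sum>i<q. lam i)"
    if h: "\<forall>i<q. is_partition (lam i) (k i) \<and> choosable (V i) (E i) (lam i)" for lam k
  proof
    have "\<forall>i<q. is_partition (lam i) (k i)" using h by blast
    then show "is_partition (\<Sum>i<q. lam i) (\<Sum>i<q. k i)"
      by (rule part_sum)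
    show "choosable (join_V q V) (join_E q V E) (\<Sum>i<q. lam i)"
      unfolding choosable_def
    proof (intro allI impI)
      fix L assume "lambda_assignment (join_V q V) (\<Sum>i<q. lam i) L"
      from core[OF _ this] h show "\<exists>f. (\<forall>v\<in>join_V q V. f v \<in> L v) \<and>
          (\<forall>u\<in>join_V q V. \<forall>v\<in>join_V q V. join_E q V E u v \<longrightarrow> f u \<noteq> f v)" by blast
    qed
  qed
  have P2: "choosable (join_V q V) (join_E q V E) (mset (map k [0..<q]))"
    if h: "\<forall>i<q. 0 < k i \<and> choosable (V i) (E i) {#k i#}" for k :: "nat \<Rightarrow> nat"
  proof -
    have "\<forall>i<q. is_partition {#k i#} (k i) \<and> choosable (V i) (E i) {#k i#}"
      using h by (simp add: is_partition_def)
    from P1[OF this] show ?thesis by (simp add: sum_single)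
  qed
  show ?thesis
  proof (rule conjI)
    show "\<forall>lam k. (\<forall>i<q. is_partition (lam i) (k i) \<and> choosable (V i) (E i) (lam i)) \<longrightarrow>
              is_partition (\<Sum>i<q. lam i) (\<Sum>i<q. k i) \<and>
              choosable (join_V q V) (join_E q V E) (\<Sum>i<q. lam i)"
      using P1 by (intro allI impI)
    show "\<forall>k. (\<forall>i<q. 0 < k i \<and> choosable (V i) (E i) {#k i#}) \<longrightarrow>
              choosable (join_V q V) (join_E q V E) (mset (map k [0..<q]))"
      using P2 by (intro allI impI)
  qed
qed

end
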